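(* Let $\kappa>0$, $p>0$, $\xi(t)=\sqrt\kappa B(t)$ with $B$ a standard Brownian motion, and let $X_s(z)$ be as defined in the context. For every $z\in\mathbb{R}_p$, almost surely $s\mapsto X_s(z)$ is not bounded on $[\pi^2/p,\infty)$.
   Context: For $p>0$ let $\mathbb{S}_p=\{0<\mathrm{Im}\,z<p\}$, $\mathbb{R}_p=ip+\mathbb{R}$. For $r>0$ let $\mathbf{S}_r(z)=\lim_{N\to\infty}\sum_{k=-N}^N\frac{e^{2kr}+z}{e^{2kr}-z}$ and $\mathbf{H}_r(z)=\frac1i\mathbf{S}_r(e^{iz})$. Let $\widetilde\varphi_t$ solve $\partial_t\widetilde\varphi_t(z)=\mathbf{H}_{p-t}(\widetilde\varphi_t(z)-\xi(t))$, $\widetilde\varphi_0(z)=z$ (annulus Loewner maps of modulus $p$ in the covering space); for $z\in\mathbb{R}_p$ the solution exists for all $t\in[0,p)$ and lies on $\mathbb{R}_{p-t}$. For $s\ge\pi^2/p$ and $z\in\mathbb{R}_p$, with $t=p-\pi^2/s$, set $X_s(z)=\frac{\pi}{p-t}\mathrm{Re}\,(\widetilde\varphi_t(z)-\xi(t))$. *)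

theory Defs
  imports "HOL-Probability.Probability"
begin

text \<open>Standard Brownian motion on a probability space M, indexed by times t \<ge> 0:
  B 0 = 0, continuous paths, independent Gaussian increments with
  B t - B s ~ N(0, t - s) for 0 \<le> s < t.  (normal_density mu sigma uses the
  standard deviation sigma.)\<close>
definition standard_BM :: "'w measure \<Rightarrow> (real \<Rightarrow> 'w \<Rightarrow> real) \<Rightarrow> bool" where
  "standard_BM M B \<longleftrightarrow>
     prob_space M \<and>
     (\<forall>t\<ge>0. B t \<in> borel_measurable M) \<and>
     (\<forall>\<omega>\<in>space M. B 0 \<omega> = 0 \<and> continuous_on {0..} (\<lambda>t. B t \<omega>)) \<and>
     (\<forall>s t. 0 \<le> s \<and> s < t \<longrightarrow>
        distributed M lborel (\<lambda>\<omega>. B t \<omega> - B s \<omega>) (normal_density 0 (sqrt (t - s)))) \<and>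
     (\<forall>(ts :: nat \<Rightarrow> real) n. 0 \<le> ts 0 \<and> (\<forall>i<n. ts i < ts (Suc i)) \<longrightarrow>
        prob_space.indep_vars M (\<lambda>_. borel) (\<lambda>i \<omega>. B (ts (Suc i)) \<omega> - B (ts i) \<omega>) {..<n})"

definition S_ann :: "real \<Rightarrow> complex \<Rightarrow> complex" where
  "S_ann r z = lim (\<lambda>N::nat. \<Sum>k\<in>{-int N..int N}.
      (complex_of_real (exp (2 * real_of_int k * r)) + z) /
      (complex_of_real (exp (2 * real_of_int k * r)) - z))"

definition H_ann :: "real \<Rightarrow> complex \<Rightarrow> complex" where
  "H_ann r z = S_ann r (exp (\<i> * z)) / \<i>"

text \<open>X_s(z) = pi/(p-t) Re(phi_t(z) - xi(t)) with t = p - pi^2/s, given the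
  Loewner trajectory phi_traj t = phi_t(z) and driving function xi.\<close>
definition X_proc :: "real \<Rightarrow> (real \<Rightarrow> complex) \<Rightarrow> (real \<Rightarrow> real) \<Rightarrow> real \<Rightarrow> real" where
  "X_proc p phi_traj xi s =
     (let t = p - pi\<^sup>2 / s in pi / (p - t) * Re (phi_traj t - complex_of_real (xi t)))"

end

theory Submission
  imports Defs
begin



definition Tm :: "real \<Rightarrow> complex \<Rightarrow> int \<Rightarrow> complex" where
  "Tm r w k = (complex_of_real (exp (2 * real_of_int k * r)) + w) /
      (complex_of_real (exp (2 * real_of_int k * r)) - w)"

lemma S_ann_Tm: "S_ann r w = lim (\<lambda>N::nat. \<Sum>k\<in>{-int N..int N}. Tm r w k)"
  unfolding S_ann_def Tm_def by simp

lemma sum_symm_int: "(\<Sum>k\<in>{-int N..int N}. f k) = f 0 + (\<Sum>k=1..N. f (int k) + f (- int k))"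
proof (induction N)
  case 0 then show ?case by simp
next
  case (Suc N)
  have e: "{-int (Suc N)..int (Suc N)} = insert (int (Suc N)) (insert (- int (Suc N)) {-int N..int N})"
    by auto
  show ?case unfolding e using Suc by (simp add: algebra_simps)
qed

lemma cis_frac:
  fixes A y :: real
  assumes A: "A > 0" "A \<noteq> 1"
  defines "D \<equiv> A\<^sup>2 + 1 - 2 * A * cos y"
  shows "D > 0"
    and "(complex_of_real A + cis y) / (complex_of_real A - cis y) = Complex ((A\<^sup>2 - 1) / D) (2 * A * sin y / D)"
proof -
  have D': "D = (A - cos y)\<^sup>2 + (sin y)\<^sup>2"
    unfolding D_def using sin_cos_squared_add[of y] by (simp add: power2_eq_square algebra_simps)
  have "D \<noteq> 0"
  proof
    assume "D = 0"
    then have s0: "sin y = 0" and "A = cos y" unfolding D' by (simp_all add: sum_power2_eq_zero_iff)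
    have "(cos y)\<^sup>2 = 1" using sin_cos_squared_add[of y] s0 by simp
    then have "A = 1 \<or> A = -1" using \<open>A = cos y\<close> by (simp add: power2_eq_1_iff)
    then show False using A by auto
  qed
  then show Dpos: "D > 0" unfolding D' by (metis D' add_nonneg_nonneg zero_le_power2 order_le_less)
  have ne: "complex_of_real A - cis y \<noteq> 0"
  proof
    assume "complex_of_real A - cis y = 0"
    then have "A = cos y" "sin y = 0" by (simp_all add: complex_eq_iff)
    then have "D = 0" unfolding D' by simp
    then show False using Dpos by simp
  qed
  have s2: "(sin y)\<^sup>2 = 1 - (cos y)\<^sup>2" using sin_cos_squared_add[of y] by linarith
  have eq: "complex_of_real A + cis y = Complex ((A\<^sup>2 - 1) / D) (2 * A * sin y / D) * (complex_of_real A - cis y)"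
  proof (simp add: complex_eq_iff, intro conjI)
    have ss: "sin y * sin y = 1 - cos y * cos y" using s2 by (simp add: power2_eq_square)
    have "(A\<^sup>2 - 1) * (A - cos y) + 2 * A * (sin y * sin y) = D * (A + cos y)"
      unfolding D_def ss by (simp add: algebra_simps power2_eq_square)
    then have "(A\<^sup>2 - 1) * (A - cos y) / D + 2 * A * sin y * sin y / D = A + cos y"
      using Dpos by (simp add: add_divide_distrib[symmetric] mult.assoc)
    then show "A + cos y = (A\<^sup>2 - 1) * (A - cos y) / D + 2 * A * sin y * sin y / D" by simp
    have "2 * A * sin y * (A - cos y) - (A\<^sup>2 - 1) * sin y = D * sin y"
      unfolding D_def by (simp add: algebra_simps power2_eq_square)
    then have "2 * A * sin y * (A - cos y) / D - (A\<^sup>2 - 1) * sin y / D = sin y"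
      using Dpos by (simp add: diff_divide_distrib[symmetric])
    then show "sin y = 2 * A * sin y * (A - cos y) / D - (A\<^sup>2 - 1) * sin y / D" by simp
  qed
  show "(complex_of_real A + cis y) / (complex_of_real A - cis y) = Complex ((A\<^sup>2 - 1) / D) (2 * A * sin y / D)"
    using eq ne by (simp add: divide_eq_eq)
qed

lemma Tm_circle:
  fixes k :: int
  assumes r: "r > 0" and z: "Im z = r"
  defines "A \<equiv> exp ((2 * real_of_int k + 1) * r)"
  defines "D \<equiv> A\<^sup>2 + 1 - 2 * A * cos (Re z)"
  shows "D > 0" "Tm r (exp (\<i> * z)) k = Complex ((A\<^sup>2 - 1) / D) (2 * A * sin (Re z) / D)"
proof -
  have "2 * real_of_int k + 1 \<noteq> 0"
  proof
    assume "2 * real_of_int k + 1 = 0"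
    then have "2 * k + 1 = 0" by linarith
    then show False by presburger
  qed
  then have A1: "A \<noteq> 1" unfolding A_def using r by simp
  have A0: "A > 0" unfolding A_def by simp
  show "D > 0" unfolding D_def using cis_frac(1)[OF A0 A1] .
  have w: "exp (\<i> * z) = complex_of_real (exp (- r)) * cis (Re z)"
    by (subst exp_eq_polar) (simp add: z)
  have a: "exp (2 * real_of_int k * r) = exp (- r) * A"
    unfolding A_def by (simp add: mult_exp_exp algebra_simps)
  have "Tm r (exp (\<i> * z)) k = (complex_of_real (exp (- r)) * (complex_of_real A + cis (Re z))) /
        (complex_of_real (exp (- r)) * (complex_of_real A - cis (Re z)))"
    unfolding Tm_def w a by (simp add: algebra_simps)
  also have "\<dots> = (complex_of_real A + cis (Re z)) / (complex_of_real A - cis (Re z))"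
    by (rule mult_divide_mult_cancel_left) simp
  also have "\<dots> = Complex ((A\<^sup>2 - 1) / D) (2 * A * sin (Re z) / D)"
    unfolding D_def by (rule cis_frac(2)[OF A0 A1])
  finally show "Tm r (exp (\<i> * z)) k = Complex ((A\<^sup>2 - 1) / D) (2 * A * sin (Re z) / D)" .
qed

lemma exp_minus_ge: "x \<ge> 0 \<Longrightarrow> exp (x::real) - exp (-x) \<ge> 2 * x"
proof -
  assume x: "x \<ge> 0"
  have "(\<lambda>t. exp t - exp (-t) - 2 * t) 0 \<le> (\<lambda>t. exp t - exp (-t) - 2 * t) x"
  proof (rule DERIV_nonneg_imp_nondecreasing[OF x])
    fix t :: real
    have d: "DERIV (\<lambda>t. exp t - exp (-t) - 2 * t) t :> exp t + exp (-t) - 2"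
      by (auto intro!: derivative_eq_intros)
    have "exp t + exp (-t) - 2 = (exp (t/2) - exp (-t/2))\<^sup>2"
      by (simp add: power2_eq_square algebra_simps mult_exp_exp)
    then have "exp t + exp (-t) - 2 \<ge> 0" by simp
    with d show "\<exists>y. DERIV (\<lambda>t. exp t - exp (-t) - 2 * t) t :> y \<and> 0 \<le> y" by blast
  qed
  then show ?thesis by simp
qed

lemma key_ineq: "exp (a::real) * a\<^sup>2 \<le> (exp a - 1)\<^sup>2"
proof -
  have pos: "exp (b::real) * b\<^sup>2 \<le> (exp b - 1)\<^sup>2" if b: "b \<ge> 0" for b
  proof -
    have ee: "exp (b/2) * exp (b/2) = exp b" by (simp add: mult_exp_exp)
    have h: "exp (b/2) - exp (-(b/2)) \<ge> 2 * (b/2)" using exp_minus_ge[of "b/2"] b by simp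
    have "exp b - 1 = exp (b/2) * (exp (b/2) - exp (-(b/2)))"
      by (simp add: algebra_simps mult_exp_exp)
    moreover have "exp (b/2) * (exp (b/2) - exp (-(b/2))) \<ge> exp (b/2) * b"
      using h by (intro mult_left_mono) auto
    moreover have "exp (b/2) * b \<ge> 0" using b by simp
    ultimately have "(exp b - 1)\<^sup>2 \<ge> (exp (b/2) * b)\<^sup>2"
      by (intro power_mono) auto
    also have "(exp (b/2) * b)\<^sup>2 = exp b * b\<^sup>2"
      using ee by (simp add: power2_eq_square algebra_simps)
    finally show ?thesis .
  qed
  show ?thesis
  proof (cases "a \<ge> 0")
    case True then show ?thesis using pos by simp
  next
    case False
    then have "exp (-a) * (-a)\<^sup>2 \<le> (exp (-a) - 1)\<^sup>2" using pos[of "-a"] by simp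
    then have ineq: "exp a * exp a * (exp (-a) * a\<^sup>2) \<le> exp a * exp a * (exp (-a) - 1)\<^sup>2"
      by (intro mult_left_mono) auto
    have em: "exp a * exp (-a) = 1" by (simp add: mult_exp_exp)
    have f1: "exp a * exp a * (exp (-a) * a\<^sup>2) = exp a * a\<^sup>2"
    proof -
      have "exp a * exp a * (exp (-a) * a\<^sup>2) = exp a * (exp a * exp (-a)) * a\<^sup>2"
        by (simp add: mult_ac)
      also have "\<dots> = exp a * a\<^sup>2" using em by simp
      finally show ?thesis .
    qed
    have f2: "exp a * exp a * (exp (-a) - 1)\<^sup>2 = (exp a - 1)\<^sup>2"
    proof -
      have "exp a * exp a * (exp (-a) - 1)\<^sup>2 = (exp a * exp (-a) - exp a)\<^sup>2"
        by (simp add: power2_eq_square algebra_simps)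
      also have "\<dots> = (1 - exp a)\<^sup>2" using em by simp
      also have "\<dots> = (exp a - 1)\<^sup>2" by (simp add: power2_commute)
      finally show ?thesis .
    qed
    show ?thesis using ineq f1 f2 by linarith
  qed
qed

definition hR :: "real \<Rightarrow> real \<Rightarrow> real" where
  "hR A c = (A\<^sup>2 - 1) / (A\<^sup>2 + 1 - 2 * A * c)"

lemma hR_inv: "A > 0 \<Longrightarrow> hR (1 / A) c = - hR A c"
proof -
  assume A: "A > 0"
  have 1: "(1/A)\<^sup>2 - 1 = (1 - A\<^sup>2) / A\<^sup>2" using A by (simp add: field_simps)
  have 2: "(1/A)\<^sup>2 + 1 - 2 * (1/A) * c = (1 + A\<^sup>2 - 2 * A * c) / A\<^sup>2"
    using A by (simp add: field_simps power2_eq_square)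
  have "hR (1 / A) c = (1 - A\<^sup>2) / (1 + A\<^sup>2 - 2 * A * c)"
    unfolding hR_def 1 2 using A by simp
  also have "\<dots> = - hR A c" unfolding hR_def minus_divide_left minus_diff_eq by (simp add: add.commute)
  finally show ?thesis .
qed

lemma Re_Tm_circle:
  fixes k :: int
  assumes r: "r > 0" and z: "Im z = r"
  shows "Re (Tm r (exp (\<i> * z)) k) = hR (exp ((2 * real_of_int k + 1) * r)) (cos (Re z))"
  using Tm_circle[OF r z, of k] unfolding hR_def by simp

lemma Im_Tm_circle:
  fixes k :: int
  assumes r: "r > 0" and z: "Im z = r"
  shows "\<bar>Im (Tm r (exp (\<i> * z)) k)\<bar> \<le> 2 * \<bar>Re z\<bar> / ((2 * real_of_int k + 1) * r)\<^sup>2"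
proof -
  define A where "A = exp ((2 * real_of_int k + 1) * r)"
  define D where "D = A\<^sup>2 + 1 - 2 * A * cos (Re z)"
  define \<alpha> where "\<alpha> = (2 * real_of_int k + 1) * r"
  have "2 * real_of_int k + 1 \<noteq> 0"
  proof
    assume "2 * real_of_int k + 1 = 0"
    then have "2 * k + 1 = 0" by linarith
    then show False by presburger
  qed
  then have a0: "\<alpha> \<noteq> 0" unfolding \<alpha>_def using r by simp
  have Dp: "D > 0" unfolding D_def A_def using Tm_circle(1)[OF r z] by simp
  have im: "Im (Tm r (exp (\<i> * z)) k) = 2 * A * sin (Re z) / D"
    unfolding A_def D_def using Tm_circle(2)[OF r z] by simp
  have A0: "A > 0" unfolding A_def by simp
  have key: "A * \<alpha>\<^sup>2 \<le> (A - 1)\<^sup>2" unfolding A_def \<alpha>_def using key_ineq by simp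
  have DA: "(A - 1)\<^sup>2 \<le> D" unfolding D_def
    using cos_le_one[of "Re z"] A0 by (simp add: power2_eq_square algebra_simps)
  have a2: "\<alpha>\<^sup>2 > 0" using a0 by simp
  have "\<bar>2 * A * sin (Re z) / D\<bar> = 2 * A * \<bar>sin (Re z)\<bar> / D"
    using A0 Dp by (simp add: abs_mult)
  also have "\<dots> \<le> 2 * A * \<bar>Re z\<bar> / D"
    using A0 Dp abs_sin_x_le_abs_x[of "Re z"] by (intro divide_right_mono mult_left_mono) auto
  also have "\<dots> \<le> 2 * A * \<bar>Re z\<bar> / (A * \<alpha>\<^sup>2)"
    using A0 Dp key DA a2 by (intro divide_left_mono) (auto intro: mult_pos_pos)
  also have "\<dots> = 2 * \<bar>Re z\<bar> / \<alpha>\<^sup>2" using A0 by simp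
  finally show ?thesis unfolding im \<alpha>_def .
qed




lemma norm_T_minus1:
  fixes w :: complex
  assumes d: "d > 0" "d \<le> norm (complex_of_real a - w)"
  shows "norm ((complex_of_real a + w) / (complex_of_real a - w) - 1) \<le> 2 * norm w / d"
proof -
  have ne: "complex_of_real a - w \<noteq> 0" using d by auto
  have "(complex_of_real a + w) / (complex_of_real a - w) - 1 = 2 * w / (complex_of_real a - w)"
    using ne by (simp add: field_simps)
  also have "norm \<dots> = 2 * norm w / norm (complex_of_real a - w)" by (simp add: norm_divide norm_mult)
  also have "\<dots> \<le> 2 * norm w / d" using d by (intro divide_left_mono) (auto intro!: mult_pos_pos)
  finally show ?thesis .
qed

lemma norm_T_plus1:
  fixes w :: complex
  assumes d: "d > 0" "d \<le> norm (complex_of_real a - w)"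
  shows "norm ((complex_of_real a + w) / (complex_of_real a - w) + 1) \<le> 2 * \<bar>a\<bar> / d"
proof -
  have ne: "complex_of_real a - w \<noteq> 0" using d by auto
  have "(complex_of_real a + w) / (complex_of_real a - w) + 1 = 2 * complex_of_real a / (complex_of_real a - w)"
    using ne by (simp add: field_simps)
  also have "norm \<dots> = 2 * \<bar>a\<bar> / norm (complex_of_real a - w)" by (simp add: norm_divide norm_mult)
  also have "\<dots> \<le> 2 * \<bar>a\<bar> / d" using d by (intro divide_left_mono) (auto intro!: mult_pos_pos)
  finally show ?thesis .
qed

lemma norm_T_diff:
  fixes w1 w2 :: complex
  assumes d1: "d1 > 0" "d1 \<le> norm (complex_of_real a - w1)"
    and d2: "d2 > 0" "d2 \<le> norm (complex_of_real a - w2)"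
  shows "norm ((complex_of_real a + w1) / (complex_of_real a - w1) - (complex_of_real a + w2) / (complex_of_real a - w2))
     \<le> 2 * \<bar>a\<bar> * norm (w1 - w2) / (d1 * d2)"
proof -
  have ne1: "complex_of_real a - w1 \<noteq> 0" using d1 by auto
  have ne2: "complex_of_real a - w2 \<noteq> 0" using d2 by auto
  have "(complex_of_real a + w1) / (complex_of_real a - w1) - (complex_of_real a + w2) / (complex_of_real a - w2)
      = 2 * complex_of_real a * (w1 - w2) / ((complex_of_real a - w1) * (complex_of_real a - w2))"
    using ne1 ne2 by (simp add: field_simps)
  also have "norm \<dots> = 2 * \<bar>a\<bar> * norm (w1 - w2) / (norm (complex_of_real a - w1) * norm (complex_of_real a - w2))"
    by (simp add: norm_divide norm_mult)
  also have "\<dots> \<le> 2 * \<bar>a\<bar> * norm (w1 - w2) / (d1 * d2)"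
  proof -
    have n1: "norm (complex_of_real a - w1) > 0" using d1 by linarith
    have n2: "norm (complex_of_real a - w2) > 0" using d2 by linarith
    show ?thesis using d1 d2 n1 n2 by (intro divide_left_mono mult_mono) (auto intro!: mult_pos_pos)
  qed
  finally show ?thesis .
qed

definition Pp :: "real \<Rightarrow> complex \<Rightarrow> nat \<Rightarrow> complex" where
  "Pp r w k = Tm r w (int k) + Tm r w (- int k)"

lemma partial_Pp: "(\<Sum>k\<in>{-int N..int N}. Tm r w k) = Tm r w 0 + (\<Sum>k<N. Pp r w (Suc k))"
proof -
  have "(\<Sum>k=1..N. Tm r w (int k) + Tm r w (- int k)) = (\<Sum>k<N. Tm r w (int (Suc k)) + Tm r w (- int (Suc k)))"
    by (rule sum_bounds_lt_plus1[symmetric])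
  then show ?thesis unfolding sum_symm_int Pp_def by simp
qed

definition inreg :: "real \<Rightarrow> complex \<Rightarrow> bool" where
  "inreg r w \<longleftrightarrow> exp (-(3*r/2)) \<le> norm w \<and> norm w \<le> exp (-(r/2))"

lemma dist_pos:
  fixes k :: nat
  assumes r: "r > 0" and w: "inreg r w"
  shows "exp (2 * real k * r) * (1 - exp (-(r/2))) \<le> norm (complex_of_real (exp (2 * real k * r)) - w)"
proof -
  let ?a = "exp (2 * real k * r)"
  have a1: "?a \<ge> 1" using r by simp
  have "norm (complex_of_real ?a - w) \<ge> \<bar>norm (complex_of_real ?a) - norm w\<bar>" by (rule norm_triangle_ineq3)
  moreover have "norm (complex_of_real ?a) = ?a" by simp
  moreover have "?a - norm w \<ge> ?a - exp (-(r/2))" using w unfolding inreg_def by simp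
  moreover have "?a - exp (-(r/2)) \<ge> ?a * (1 - exp (-(r/2)))"
    using a1 mult_right_mono[of 1 ?a "exp (-(r/2))"] by (simp add: algebra_simps)
  ultimately show ?thesis by linarith
qed

lemma dist_neg:
  fixes k :: nat
  assumes r: "r > 0" and w: "inreg r w" and k: "k \<ge> 1"
  shows "exp (-(3*r/2)) * (1 - exp (-(r/2))) \<le> norm (complex_of_real (exp (2 * real_of_int (- int k) * r)) - w)"
proof -
  let ?a = "exp (2 * real_of_int (- int k) * r)"
  have "2 * real_of_int (- int k) * r \<le> -2 * r" using k r by simp
  then have a1: "?a \<le> exp (-2 * r)" by simp
  have "norm (complex_of_real ?a - w) \<ge> \<bar>norm (complex_of_real ?a) - norm w\<bar>" by (rule norm_triangle_ineq3)
  moreover have "norm (complex_of_real ?a) = ?a" by simp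
  moreover have "norm w - ?a \<ge> exp (-(3*r/2)) - exp (-2 * r)" using w a1 unfolding inreg_def by linarith
  moreover have "exp (-(3*r/2)) - exp (-2 * r) = exp (-(3*r/2)) * (1 - exp (-(r/2)))"
    by (simp add: algebra_simps mult_exp_exp)
  ultimately show ?thesis by linarith
qed

lemma exp_nat_q: "exp (2 * real k * r) * exp (-2 * r) ^ k = 1"
  by (simp add: exp_of_nat_mult[symmetric] mult_exp_exp)

lemma exp_neg_q: "exp (2 * real_of_int (- int k) * r) = exp (-2 * r) ^ k"
  by (simp add: exp_of_nat_mult[symmetric] mult_ac)

lemma Pp_bound:
  assumes r: "r > 0" and w: "inreg r w" and k: "k \<ge> 1"
  defines "\<beta> \<equiv> 1 - exp (-(r/2))"
  shows "norm (Pp r w k) \<le> (2 / \<beta> + 2 / (exp (-(3*r/2)) * \<beta>)) * exp (-2 * r) ^ k"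
proof -
  have b: "\<beta> > 0" unfolding \<beta>_def using r by simp
  let ?q = "exp (-2 * r)"
  let ?a = "exp (2 * real k * r)"
  have a1: "?a * \<beta> > 0" using b by simp
  have "exp (-(r/2)) \<le> 1" using r by simp
  then have nw: "norm w \<le> 1" using w unfolding inreg_def by linarith
  have t1: "norm (Tm r w (int k) - 1) \<le> 2 * norm w / (?a * \<beta>)"
    unfolding Tm_def using norm_T_minus1[OF a1 dist_pos[OF r w, of k, folded \<beta>_def]] by simp
  also have "\<dots> \<le> 2 / (?a * \<beta>)" using nw a1 by (intro divide_right_mono) auto
  also have "\<dots> = 2 / \<beta> * ?q ^ k" using exp_nat_q[of k r] b by (simp add: field_simps)
  finally have t1': "norm (Tm r w (int k) - 1) \<le> 2 / \<beta> * ?q ^ k" .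
  have e0: "exp (-(3*r/2)) * \<beta> > 0" using b by simp
  have t2: "norm (Tm r w (- int k) + 1) \<le> 2 * \<bar>exp (2 * real_of_int (- int k) * r)\<bar> / (exp (-(3*r/2)) * \<beta>)"
    unfolding Tm_def using norm_T_plus1[OF e0 dist_neg[OF r w k, folded \<beta>_def]] by simp
  also have "\<dots> = 2 / (exp (-(3*r/2)) * \<beta>) * ?q ^ k" unfolding exp_neg_q by simp
  finally have t2': "norm (Tm r w (- int k) + 1) \<le> 2 / (exp (-(3*r/2)) * \<beta>) * ?q ^ k" .
  have "Pp r w k = (Tm r w (int k) - 1) + (Tm r w (- int k) + 1)" unfolding Pp_def by simp
  then have "norm (Pp r w k) \<le> norm (Tm r w (int k) - 1) + norm (Tm r w (- int k) + 1)"
    by (metis norm_triangle_ineq)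
  also have "\<dots> \<le> 2 / \<beta> * ?q ^ k + 2 / (exp (-(3*r/2)) * \<beta>) * ?q ^ k" using t1' t2' by simp
  finally show ?thesis by (simp add: algebra_simps)
qed




lemma norm_suminf_le:
  fixes f :: "nat \<Rightarrow> 'a::banach"
  assumes "\<And>k. norm (f k) \<le> g k" "summable g"
  shows "summable f" "norm (suminf f) \<le> suminf g"
proof -
  have s: "summable (\<lambda>k. norm (f k))"
    by (rule summable_comparison_test'[OF assms(2)]) (use assms(1) in simp)
  then show "summable f" by (rule summable_norm_cancel)
  have "norm (suminf f) \<le> (\<Sum>k. norm (f k))" by (rule summable_norm[OF s])
  also have "\<dots> \<le> suminf g" by (rule suminf_le[OF assms(1) s assms(2)])
  finally show "norm (suminf f) \<le> suminf g" .
qed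

lemma geom_suc_sums:
  fixes q :: real
  assumes "0 \<le> q" "q < 1"
  shows "(\<lambda>k. C * q ^ Suc k) sums (C * q / (1 - q))"
proof -
  have "(\<lambda>k. (C * q) * q ^ k) sums ((C * q) * (1 / (1 - q)))"
    by (intro sums_mult geometric_sums) (use assms in simp)
  then show ?thesis by (simp add: mult_ac)
qed

lemma Tm_pos_lip:
  fixes k :: nat
  assumes r: "r > 0" and w1: "inreg r w1" and w2: "inreg r w2"
  defines "\<beta> \<equiv> 1 - exp (-(r/2))"
  shows "norm (Tm r w1 (int k) - Tm r w2 (int k)) \<le> 2 / \<beta>\<^sup>2 * exp (-2 * r) ^ k * norm (w1 - w2)"
proof -
  have b: "\<beta> > 0" unfolding \<beta>_def using r by simp
  let ?a = "exp (2 * real k * r)"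
  have a1: "?a * \<beta> > 0" using b by simp
  have "norm (Tm r w1 (int k) - Tm r w2 (int k)) \<le> 2 * \<bar>?a\<bar> * norm (w1 - w2) / ((?a * \<beta>) * (?a * \<beta>))"
    unfolding Tm_def using norm_T_diff[OF a1 dist_pos[OF r w1, of k, folded \<beta>_def] a1 dist_pos[OF r w2, of k, folded \<beta>_def]]
    by simp
  also have "\<dots> = 2 / \<beta>\<^sup>2 * (1 / ?a) * norm (w1 - w2)" using b by (simp add: field_simps power2_eq_square)
  also have "1 / ?a = exp (-2 * r) ^ k" using exp_nat_q[of k r] by (simp add: field_simps)
  finally show ?thesis by simp
qed

lemma Tm_neg_lip:
  fixes k :: nat
  assumes r: "r > 0" and w1: "inreg r w1" and w2: "inreg r w2" and k: "k \<ge> 1"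
  defines "\<beta> \<equiv> 1 - exp (-(r/2))"
  shows "norm (Tm r w1 (- int k) - Tm r w2 (- int k)) \<le> 2 / (exp (-(3*r/2)) * \<beta>)\<^sup>2 * exp (-2 * r) ^ k * norm (w1 - w2)"
proof -
  have b: "\<beta> > 0" unfolding \<beta>_def using r by simp
  have e0: "exp (-(3*r/2)) * \<beta> > 0" using b by simp
  have "norm (Tm r w1 (- int k) - Tm r w2 (- int k)) \<le> 2 * \<bar>exp (2 * real_of_int (- int k) * r)\<bar> * norm (w1 - w2) / ((exp (-(3*r/2)) * \<beta>) * (exp (-(3*r/2)) * \<beta>))"
    unfolding Tm_def using norm_T_diff[OF e0 dist_neg[OF r w1 k, folded \<beta>_def] e0 dist_neg[OF r w2 k, folded \<beta>_def]]
    by simp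
  also have "\<dots> = 2 / (exp (-(3*r/2)) * \<beta>)\<^sup>2 * exp (-2 * r) ^ k * norm (w1 - w2)"
    unfolding exp_neg_q by (simp add: power2_eq_square)
  finally show ?thesis .
qed

definition Cl :: "real \<Rightarrow> real" where
  "Cl r = 2 / (1 - exp (-(r/2)))\<^sup>2 + 2 / (exp (-(3*r/2)) * (1 - exp (-(r/2))))\<^sup>2"

definition Cp :: "real \<Rightarrow> real" where
  "Cp r = 2 / (1 - exp (-(r/2))) + 2 / (exp (-(3*r/2)) * (1 - exp (-(r/2))))"

lemma Pp_lip:
  assumes r: "r > 0" and w1: "inreg r w1" and w2: "inreg r w2" and k: "k \<ge> 1"
  shows "norm (Pp r w1 k - Pp r w2 k) \<le> Cl r * exp (-2 * r) ^ k * norm (w1 - w2)"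
proof -
  have "Pp r w1 k - Pp r w2 k = (Tm r w1 (int k) - Tm r w2 (int k)) + (Tm r w1 (- int k) - Tm r w2 (- int k))"
    unfolding Pp_def by simp
  then have "norm (Pp r w1 k - Pp r w2 k) \<le> norm (Tm r w1 (int k) - Tm r w2 (int k)) + norm (Tm r w1 (- int k) - Tm r w2 (- int k))"
    by (metis norm_triangle_ineq)
  also have "\<dots> \<le> Cl r * exp (-2 * r) ^ k * norm (w1 - w2)"
    using Tm_pos_lip[OF r w1 w2, of k] Tm_neg_lip[OF r w1 w2 k] unfolding Cl_def by (simp add: algebra_simps)
  finally show ?thesis .
qed

lemma q_props: "r > 0 \<Longrightarrow> 0 \<le> exp (-2 * r) \<and> exp (-2 * r) < (1::real)"
  by simp

lemma S_repr:
  assumes r: "r > 0" and w: "inreg r w"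
  shows "summable (\<lambda>k. Pp r w (Suc k))"
    and "(\<lambda>N. \<Sum>k\<in>{-int N..int N}. Tm r w k) \<longlonglongrightarrow> Tm r w 0 + (\<Sum>k. Pp r w (Suc k))"
    and "S_ann r w = Tm r w 0 + (\<Sum>k. Pp r w (Suc k))"
proof -
  have q: "0 \<le> exp (-2 * r)" "exp (-2 * r) < 1" using r by auto
  have bd: "norm (Pp r w (Suc k)) \<le> Cp r * exp (-2 * r) ^ Suc k" for k
    using Pp_bound[OF r w, of "Suc k"] unfolding Cp_def by simp
  have sg: "summable (\<lambda>k. Cp r * exp (-2 * r) ^ Suc k)"
    using geom_suc_sums[OF q] by (rule sums_summable)
  show sm: "summable (\<lambda>k. Pp r w (Suc k))" using norm_suminf_le(1)[OF bd sg] .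
  have "(\<lambda>N. Tm r w 0 + (\<Sum>k<N. Pp r w (Suc k))) \<longlonglongrightarrow> Tm r w 0 + (\<Sum>k. Pp r w (Suc k))"
    by (intro tendsto_add tendsto_const summable_LIMSEQ sm)
  then show lim: "(\<lambda>N. \<Sum>k\<in>{-int N..int N}. Tm r w k) \<longlonglongrightarrow> Tm r w 0 + (\<Sum>k. Pp r w (Suc k))"
    unfolding partial_Pp .
  show "S_ann r w = Tm r w 0 + (\<Sum>k. Pp r w (Suc k))"
    unfolding S_ann_Tm using lim by (rule limI)
qed

definition Lip :: "real \<Rightarrow> real" where
  "Lip r = 2 / (1 - exp (-(r/2)))\<^sup>2 + Cl r * exp (-2 * r) / (1 - exp (-2 * r))"

lemma S_lip:
  assumes r: "r > 0" and w1: "inreg r w1" and w2: "inreg r w2"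
  shows "norm (S_ann r w1 - S_ann r w2) \<le> Lip r * norm (w1 - w2)"
proof -
  have q: "0 \<le> exp (-2 * r)" "exp (-2 * r) < 1" using r by auto
  have "S_ann r w1 - S_ann r w2 = (Tm r w1 0 - Tm r w2 0) + ((\<Sum>k. Pp r w1 (Suc k)) - (\<Sum>k. Pp r w2 (Suc k)))"
    unfolding S_repr(3)[OF r w1] S_repr(3)[OF r w2] by simp
  also have "(\<Sum>k. Pp r w1 (Suc k)) - (\<Sum>k. Pp r w2 (Suc k)) = (\<Sum>k. Pp r w1 (Suc k) - Pp r w2 (Suc k))"
    by (rule suminf_diff[OF S_repr(1)[OF r w1] S_repr(1)[OF r w2]])
  finally have eq: "S_ann r w1 - S_ann r w2 = (Tm r w1 0 - Tm r w2 0) + (\<Sum>k. Pp r w1 (Suc k) - Pp r w2 (Suc k))" .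
  have t0: "norm (Tm r w1 0 - Tm r w2 0) \<le> 2 / (1 - exp (-(r/2)))\<^sup>2 * norm (w1 - w2)"
    using Tm_pos_lip[OF r w1 w2, of 0] by simp
  have bd: "norm (Pp r w1 (Suc k) - Pp r w2 (Suc k)) \<le> (Cl r * norm (w1 - w2)) * exp (-2 * r) ^ Suc k" for k
    using Pp_lip[OF r w1 w2, of "Suc k"] by (simp add: mult_ac)
  have sg: "(\<lambda>k. (Cl r * norm (w1 - w2)) * exp (-2 * r) ^ Suc k) sums ((Cl r * norm (w1 - w2)) * exp (-2 * r) / (1 - exp (-2 * r)))"
    by (rule geom_suc_sums[OF q])
  have t1: "norm (\<Sum>k. Pp r w1 (Suc k) - Pp r w2 (Suc k)) \<le> (Cl r * norm (w1 - w2)) * exp (-2 * r) / (1 - exp (-2 * r))"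
    using norm_suminf_le(2)[OF bd sums_summable[OF sg]] sums_unique[OF sg] by simp
  have "norm (S_ann r w1 - S_ann r w2) \<le> norm (Tm r w1 0 - Tm r w2 0) + norm (\<Sum>k. Pp r w1 (Suc k) - Pp r w2 (Suc k))"
    unfolding eq by (rule norm_triangle_ineq)
  also have "\<dots> \<le> 2 / (1 - exp (-(r/2)))\<^sup>2 * norm (w1 - w2) + (Cl r * norm (w1 - w2)) * exp (-2 * r) / (1 - exp (-2 * r))"
    using t0 t1 by simp
  also have "\<dots> = Lip r * norm (w1 - w2)" unfolding Lip_def by (simp add: algebra_simps)
  finally show ?thesis .
qed




lemma inreg_circle:
  assumes r: "r > 0" and z: "Im z = r"
  shows "inreg r (exp (\<i> * z))"
proof -
  have "norm (exp (\<i> * z)) = exp (- r)" using z by simp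
  then show ?thesis unfolding inreg_def using r by simp
qed

lemma Re_partial_circle:
  assumes r: "r > 0" and z: "Im z = r"
  shows "Re (\<Sum>k\<in>{-int N..int N}. Tm r (exp (\<i> * z)) k) = hR (exp ((2 * real N + 1) * r)) (cos (Re z))"
proof -
  let ?c = "cos (Re z)"
  define g where "g n = hR (exp ((2 * real n + 1) * r)) ?c" for n :: nat
  have pos: "Re (Tm r (exp (\<i> * z)) (int k)) = g k" for k :: nat
    unfolding g_def using Re_Tm_circle[OF r z, of "int k"] by simp
  have neg: "Re (Tm r (exp (\<i> * z)) (- int (Suc k))) = - g k" for k :: nat
  proof -
    have "Re (Tm r (exp (\<i> * z)) (- int (Suc k))) = hR (exp (- ((2 * real k + 1) * r))) ?c"
      using Re_Tm_circle[OF r z, of "- int (Suc k)"] by (simp add: algebra_simps)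
    also have "exp (- ((2 * real k + 1) * r)) = 1 / exp ((2 * real k + 1) * r)" by (simp only: exp_minus inverse_eq_divide)
    also have "hR (1 / exp ((2 * real k + 1) * r)) ?c = - g k" unfolding g_def by (rule hR_inv) simp
    finally show ?thesis .
  qed
  have "Re (\<Sum>k\<in>{-int N..int N}. Tm r (exp (\<i> * z)) k) = Re (Tm r (exp (\<i> * z)) 0) +
      (\<Sum>k=1..N. Re (Tm r (exp (\<i> * z)) (int k)) + Re (Tm r (exp (\<i> * z)) (- int k)))"
    unfolding Re_sum sum_symm_int by simp
  also have "\<dots> = g N"
  proof (induction N)
    case 0 then show ?case using pos[of 0] by simp
  next
    case (Suc N)
    have "Re (Tm r (exp (\<i> * z)) (- int (Suc N))) = - g N" by (rule neg)
    then show ?case using Suc pos[of "Suc N"] by simp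
  qed
  finally show ?thesis unfolding g_def .
qed

lemma hR_alt: "A > 0 \<Longrightarrow> hR A c = (1 - (1/A)\<^sup>2) / (1 + (1/A)\<^sup>2 - 2 * c * (1/A))"
proof -
  assume A: "A > 0"
  have 1: "1 - (1/A)\<^sup>2 = (A\<^sup>2 - 1) / A\<^sup>2" using A by (simp add: field_simps)
  have 2: "1 + (1/A)\<^sup>2 - 2 * c * (1/A) = (A\<^sup>2 + 1 - 2 * A * c) / A\<^sup>2"
    using A by (simp add: field_simps power2_eq_square)
  show ?thesis unfolding hR_def 1 2 using A by simp
qed

lemma hR_lim:
  assumes r: "r > 0"
  shows "(\<lambda>N. hR (exp ((2 * real N + 1) * r)) c) \<longlonglongrightarrow> 1"
proof -
  have x: "(\<lambda>N::nat. exp (- r) * exp (-2 * r) ^ N) \<longlonglongrightarrow> exp (- r) * 0"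
    by (intro tendsto_mult tendsto_const LIMSEQ_power_zero) (use r in simp)
  have e: "1 / exp ((2 * real N + 1) * r) = exp (- r) * exp (-2 * r) ^ N" for N :: nat
  proof -
    have "exp (-2 * r) ^ N = exp (real N * (-2 * r))" by (rule exp_of_nat_mult[symmetric])
    then have "exp (- r) * exp (-2 * r) ^ N = exp (- r + real N * (-2 * r))" by (simp only: exp_add)
    also have "- r + real N * (-2 * r) = - ((2 * real N + 1) * r)" by (simp add: algebra_simps)
    also have "exp (- ((2 * real N + 1) * r)) = 1 / exp ((2 * real N + 1) * r)" by (simp only: exp_minus inverse_eq_divide)
    finally show ?thesis by simp
  qed
  have x': "(\<lambda>N::nat. 1 / exp ((2 * real N + 1) * r)) \<longlonglongrightarrow> 0"
    unfolding e using x by simp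
  have "(\<lambda>N. (1 - (1 / exp ((2 * real N + 1) * r))\<^sup>2) / (1 + (1 / exp ((2 * real N + 1) * r))\<^sup>2 - 2 * c * (1 / exp ((2 * real N + 1) * r))))
      \<longlonglongrightarrow> (1 - 0\<^sup>2) / (1 + 0\<^sup>2 - 2 * c * 0)"
    by (intro tendsto_intros x') simp
  then show ?thesis by (subst hR_alt) simp_all
qed

lemma inv_sq_sum: "(\<Sum>k=1..N. 1 / (real k)\<^sup>2) \<le> 2 - 2 / (real N + 1)"
proof (induction N)
  case 0 then show ?case by simp
next
  case (Suc N)
  have e: "2 / (real N + 1) - 2 / (real N + 2) = 2 / ((real N + 1) * (real N + 2))"
    by (simp add: field_simps)
  have "1 / (real N + 1)\<^sup>2 = 2 / (2 * (real N + 1)\<^sup>2)" by simp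
  also have "\<dots> \<le> 2 / ((real N + 1) * (real N + 2))"
    by (intro divide_left_mono) (auto simp: power2_eq_square intro!: mult_pos_pos)
  finally have "1 / (real N + 1)\<^sup>2 \<le> 2 / (real N + 1) - 2 / (real N + 2)" unfolding e .
  then show ?case using Suc by (simp add: add.commute)
qed

lemma odd_sum_bound: "(\<Sum>k\<in>{-int N..int N}. 1 / (2 * real_of_int k + 1)\<^sup>2) \<le> 5"
proof -
  have t: "1 / (2 * real_of_int (int k) + 1)\<^sup>2 + 1 / (2 * real_of_int (- int k) + 1)\<^sup>2 \<le> 2 * (1 / (real k)\<^sup>2)"
    if k: "k \<in> {1..N}" for k
  proof -
    have k1: "real k \<ge> 1" using k by simp
    have a: "1 / (2 * real k + 1)\<^sup>2 \<le> 1 / (real k)\<^sup>2"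
      using k1 by (intro divide_left_mono power_mono) auto
    have b: "1 / (2 * (- real k) + 1)\<^sup>2 \<le> 1 / (real k)\<^sup>2"
    proof -
      have "(2 * (- real k) + 1)\<^sup>2 = (2 * real k - 1)\<^sup>2" by (simp add: power2_eq_square algebra_simps)
      moreover have "1 / (2 * real k - 1)\<^sup>2 \<le> 1 / (real k)\<^sup>2"
        using k1 by (intro divide_left_mono power_mono) auto
      ultimately show ?thesis by simp
    qed
    show ?thesis using a b by simp
  qed
  have "(\<Sum>k\<in>{-int N..int N}. 1 / (2 * real_of_int k + 1)\<^sup>2) =
      1 + (\<Sum>k=1..N. 1 / (2 * real_of_int (int k) + 1)\<^sup>2 + 1 / (2 * real_of_int (- int k) + 1)\<^sup>2)"
    unfolding sum_symm_int by simp
  also have "\<dots> \<le> 1 + (\<Sum>k=1..N. 2 * (1 / (real k)\<^sup>2))"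
    using t by (intro add_left_mono sum_mono) auto
  also have "\<dots> = 1 + 2 * (\<Sum>k=1..N. 1 / (real k)\<^sup>2)" by (simp add: sum_distrib_left)
  also have "\<dots> \<le> 1 + 2 * 2" using inv_sq_sum[of N] by (smt (verit) divide_nonneg_nonneg of_nat_0_le_iff)
  finally show ?thesis by simp
qed

lemma S_circle:
  assumes r: "r > 0" and z: "Im z = r"
  shows "Re (S_ann r (exp (\<i> * z))) = 1"
    and "\<bar>Im (S_ann r (exp (\<i> * z)))\<bar> \<le> 10 * \<bar>Re z\<bar> / r\<^sup>2"
proof -
  let ?w = "exp (\<i> * z)"
  have w: "inreg r ?w" by (rule inreg_circle[OF r z])
  have lim: "(\<lambda>N. \<Sum>k\<in>{-int N..int N}. Tm r ?w k) \<longlonglongrightarrow> S_ann r ?w"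
    using S_repr(2,3)[OF r w] by simp
  have "(\<lambda>N. Re (\<Sum>k\<in>{-int N..int N}. Tm r ?w k)) \<longlonglongrightarrow> Re (S_ann r ?w)"
    by (rule tendsto_Re[OF lim])
  moreover have "(\<lambda>N. Re (\<Sum>k\<in>{-int N..int N}. Tm r ?w k)) \<longlonglongrightarrow> 1"
    unfolding Re_partial_circle[OF r z] by (rule hR_lim[OF r])
  ultimately show "Re (S_ann r ?w) = 1" by (rule LIMSEQ_unique)
  have bd: "\<bar>Im (\<Sum>k\<in>{-int N..int N}. Tm r ?w k)\<bar> \<le> 10 * \<bar>Re z\<bar> / r\<^sup>2" for N
  proof -
    have "\<bar>Im (\<Sum>k\<in>{-int N..int N}. Tm r ?w k)\<bar> \<le> (\<Sum>k\<in>{-int N..int N}. \<bar>Im (Tm r ?w k)\<bar>)"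
      unfolding Im_sum by (rule sum_abs)
    also have "\<dots> \<le> (\<Sum>k\<in>{-int N..int N}. 2 * \<bar>Re z\<bar> / r\<^sup>2 * (1 / (2 * real_of_int k + 1)\<^sup>2))"
    proof (rule sum_mono)
      fix k assume "k \<in> {-int N..int N}"
      have "\<bar>Im (Tm r ?w k)\<bar> \<le> 2 * \<bar>Re z\<bar> / ((2 * real_of_int k + 1) * r)\<^sup>2" by (rule Im_Tm_circle[OF r z])
      also have "\<dots> = 2 * \<bar>Re z\<bar> / r\<^sup>2 * (1 / (2 * real_of_int k + 1)\<^sup>2)"
        by (simp add: power_mult_distrib)
      finally show "\<bar>Im (Tm r ?w k)\<bar> \<le> 2 * \<bar>Re z\<bar> / r\<^sup>2 * (1 / (2 * real_of_int k + 1)\<^sup>2)" .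
    qed
    also have "\<dots> = 2 * \<bar>Re z\<bar> / r\<^sup>2 * (\<Sum>k\<in>{-int N..int N}. 1 / (2 * real_of_int k + 1)\<^sup>2)"
      by (simp add: sum_distrib_left)
    also have "\<dots> \<le> 2 * \<bar>Re z\<bar> / r\<^sup>2 * 5"
      by (intro mult_left_mono odd_sum_bound) simp
    finally show ?thesis by simp
  qed
  have "(\<lambda>N. \<bar>Im (\<Sum>k\<in>{-int N..int N}. Tm r ?w k)\<bar>) \<longlonglongrightarrow> \<bar>Im (S_ann r ?w)\<bar>"
    by (intro tendsto_rabs tendsto_Im lim)
  then show "\<bar>Im (S_ann r ?w)\<bar> \<le> 10 * \<bar>Re z\<bar> / r\<^sup>2"
    by (rule LIMSEQ_le_const2) (use bd in auto)
qed

lemma H_circle: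
  assumes r: "r > 0" and z: "Im z = r"
  shows "Im (H_ann r z) = -1" and "\<bar>Re (H_ann r z)\<bar> \<le> 10 * \<bar>Re z\<bar> / r\<^sup>2"
proof -
  have e: "H_ann r z = - \<i> * S_ann r (exp (\<i> * z))" unfolding H_ann_def by (simp add: divide_complex_def)
  show "Im (H_ann r z) = -1" unfolding e using S_circle(1)[OF r z] by simp
  show "\<bar>Re (H_ann r z)\<bar> \<le> 10 * \<bar>Re z\<bar> / r\<^sup>2" unfolding e using S_circle(2)[OF r z] by simp
qed




lemma deriv_at_interior:
  assumes "(g has_real_derivative D) (at s within {0..<p})" "0 < s" "s < p"
  shows "(g has_real_derivative D) (at s)"
proof -
  have "at s within {0..<p} = at s"
    by (rule at_within_open_subset[of s "{0<..<p}"]) (use assms in auto)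
  then show ?thesis using assms(1) by simp
qed

lemma cont_from_deriv:
  assumes "\<forall>s\<in>{0..<p}. (g has_real_derivative g' s) (at s within {0..<p})"
  shows "continuous_on {0..<p} g"
  unfolding continuous_on_eq_continuous_within using assms DERIV_continuous by blast

lemma mvt_bound:
  fixes g g' :: "real \<Rightarrow> real"
  assumes ab: "0 \<le> a" "a \<le> b" "b < p"
    and d: "\<forall>s\<in>{0..<p}. (g has_real_derivative g' s) (at s within {0..<p})"
    and B: "\<forall>s\<in>{a..b}. \<bar>g' s\<bar> \<le> B"
  shows "\<bar>g b - g a\<bar> \<le> B * (b - a)"
proof -
  have c: "continuous_on {a..b} g"
    by (rule continuous_on_subset[OF cont_from_deriv[OF d]]) (use ab in auto)
  have da: "(g has_real_derivative g' x) (at x)" if "a < x" "x < b" for x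
    using d that ab by (intro deriv_at_interior[of g _ x p]) auto
  have 1: "(\<lambda>s. g s + B * s) a \<le> (\<lambda>s. g s + B * s) b"
  proof (rule DERIV_nonneg_imp_increasing_open[OF ab(2)])
    fix x assume x: "a < x" "x < b"
    have "((\<lambda>s. g s + B * s) has_real_derivative g' x + B) (at x)"
      by (auto intro!: derivative_eq_intros da x)
    moreover have "\<bar>g' x\<bar> \<le> B" using B x by auto
    then have "g' x + B \<ge> 0" by linarith
    ultimately show "\<exists>y. ((\<lambda>s. g s + B * s) has_real_derivative y) (at x) \<and> 0 \<le> y" by blast
  next
    show "continuous_on {a..b} (\<lambda>s. g s + B * s)" by (intro continuous_intros c)
  qed
  have 2: "(\<lambda>s. B * s - g s) a \<le> (\<lambda>s. B * s - g s) b"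
  proof (rule DERIV_nonneg_imp_increasing_open[OF ab(2)])
    fix x assume x: "a < x" "x < b"
    have "((\<lambda>s. B * s - g s) has_real_derivative B - g' x) (at x)"
      by (auto intro!: derivative_eq_intros da x)
    moreover have "\<bar>g' x\<bar> \<le> B" using B x by auto
    then have "B - g' x \<ge> 0" by linarith
    ultimately show "\<exists>y. ((\<lambda>s. B * s - g s) has_real_derivative y) (at x) \<and> 0 \<le> y" by blast
  next
    show "continuous_on {a..b} (\<lambda>s. B * s - g s)" by (intro continuous_intros c)
  qed
  show ?thesis using 1 2 by (simp add: algebra_simps abs_le_iff)
qed

lemma gronwall_zero:
  fixes f f' :: "real \<Rightarrow> real"
  assumes T: "0 \<le> T" "T < p" and f0: "f 0 = 0"
    and d: "\<forall>t\<in>{0..<p}. (f has_real_derivative f' t) (at t within {0..<p})"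
    and bnd: "\<And>t. t \<in> {0..T} \<Longrightarrow> \<bar>f t\<bar> \<le> \<delta> \<Longrightarrow> \<bar>f' t\<bar> \<le> L * \<bar>f t\<bar>"
    and \<delta>: "\<delta> > 0"
    and t: "t \<in> {0..T}"
  shows "f t = 0"
proof (rule ccontr)
  assume ft: "f t \<noteq> 0"
  define \<eta> where "\<eta> = min \<delta> \<bar>f t\<bar>"
  have \<eta>: "\<eta> > 0" "\<eta> \<le> \<delta>" unfolding \<eta>_def using ft \<delta> by auto
  define K where "K = {s \<in> {0..T}. (\<lambda>_. \<eta>) s \<le> (\<lambda>s. \<bar>f s\<bar>) s}"
  have cf: "continuous_on {0..T} f"
    by (rule continuous_on_subset[OF cont_from_deriv[OF d]]) (use T in auto)
  have "closed K" unfolding K_def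
    by (intro continuous_on_closed_Collect_le continuous_intros cf closed_atLeastAtMost)
  moreover have "t \<in> K" unfolding K_def \<eta>_def using t by auto
  moreover have bb: "bdd_below K" unfolding K_def by (rule bdd_belowI[of _ 0]) auto
  ultimately have sK: "Inf K \<in> K" using closed_contains_Inf by blast
  define s where "s = Inf K"
  have s: "s \<in> {0..T}" "\<eta> \<le> \<bar>f s\<bar>" using sK unfolding s_def K_def by auto
  have s0: "s > 0"
  proof -
    have "s \<noteq> 0" using s f0 \<eta> by auto
    then show ?thesis using s by auto
  qed
  have small: "\<bar>f u\<bar> \<le> \<delta>" if u: "0 \<le> u" "u < s" for u
  proof (rule ccontr)
    assume "\<not> \<bar>f u\<bar> \<le> \<delta>"
    then have "u \<in> K" unfolding K_def using u s \<eta> by auto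
    then have "s \<le> u" unfolding s_def using bb by (rule cInf_lower)
    then show False using u by simp
  qed
  define \<psi> where "\<psi> u = exp (- 2 * L * u) * (f u)\<^sup>2" for u
  have "\<psi> s \<le> \<psi> 0"
  proof (rule DERIV_nonpos_imp_decreasing_open[of 0 s])
    show "0 \<le> s" using s0 by simp
    show "continuous_on {0..s} \<psi>" unfolding \<psi>_def
      by (intro continuous_intros continuous_on_subset[OF cf]) (use s in auto)
    fix x assume x: "0 < x" "x < s"
    have dx: "(f has_real_derivative f' x) (at x)"
      using d x s T by (intro deriv_at_interior[of f _ x p]) auto
    have "(\<psi> has_real_derivative (exp (- 2 * L * x) * (- 2 * L) * (f x)\<^sup>2 + exp (- 2 * L * x) * (2 * f x * f' x))) (at x)"
      unfolding \<psi>_def by (auto intro!: derivative_eq_intros dx simp: power2_eq_square algebra_simps)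
    moreover have "exp (- 2 * L * x) * (- 2 * L) * (f x)\<^sup>2 + exp (- 2 * L * x) * (2 * f x * f' x) \<le> 0"
    proof -
      have xT: "x \<in> {0..T}" using x s by auto
      have "\<bar>f' x\<bar> \<le> L * \<bar>f x\<bar>" using bnd[OF xT small[of x]] x by simp
      then have "\<bar>f x\<bar> * \<bar>f' x\<bar> \<le> \<bar>f x\<bar> * (L * \<bar>f x\<bar>)" by (rule mult_left_mono) simp
      moreover have "f x * f' x \<le> \<bar>f x\<bar> * \<bar>f' x\<bar>" by (simp add: abs_mult[symmetric])
      moreover have "\<bar>f x\<bar> * (L * \<bar>f x\<bar>) = L * (f x)\<^sup>2" by (simp add: power2_eq_square abs_mult_self_eq)
      ultimately have "f x * f' x \<le> L * (f x)\<^sup>2" by linarith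
      then have "(- 2 * L) * (f x)\<^sup>2 + 2 * f x * f' x \<le> 0" by simp
      then have "exp (- 2 * L * x) * ((- 2 * L) * (f x)\<^sup>2 + 2 * f x * f' x) \<le> 0"
        by (simp add: mult_nonneg_nonpos)
      then show ?thesis by (simp add: algebra_simps)
    qed
    ultimately show "\<exists>y. (\<psi> has_real_derivative y) (at x) \<and> y \<le> 0" by blast
  qed
  then have "(f s)\<^sup>2 \<le> 0" unfolding \<psi>_def using f0 by (simp add: mult_le_0_iff)
  then have "f s = 0" by simp
  then show False using s \<eta> by simp
qed




lemma exp_lip: "(a::real) \<le> 0 \<Longrightarrow> b \<le> 0 \<Longrightarrow> \<bar>exp a - exp b\<bar> \<le> \<bar>a - b\<bar>"
proof -
  have main: "exp a - exp b \<le> a - b" if "b \<le> a" "a \<le> 0" for a b :: real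
  proof -
    have "exp (b - a) \<ge> 1 + (b - a)" by (rule exp_ge_add_one_self)
    then have "1 - exp (b - a) \<le> a - b" by linarith
    moreover have "exp a - exp b = exp a * (1 - exp (b - a))"
      by (simp add: algebra_simps mult_exp_exp)
    moreover have "exp a * (1 - exp (b - a)) \<le> 1 * (1 - exp (b - a))"
      using that by (intro mult_right_mono) auto
    ultimately show ?thesis by simp
  qed
  assume "a \<le> 0" "b \<le> 0"
  then show ?thesis using main[of b a] main[of a b]
    by (cases "b \<le> a") (auto simp: abs_if)
qed

lemma Lip_nonneg: "r > 0 \<Longrightarrow> Lip r \<ge> 0"
  unfolding Lip_def Cl_def by (intro add_nonneg_nonneg mult_nonneg_nonneg divide_nonneg_pos) auto

lemma ImH_lip:
  assumes r: "r > 0" and zr: "\<bar>Im z - r\<bar> \<le> r / 2"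
  shows "\<bar>Im (H_ann r z) + 1\<bar> \<le> Lip r * \<bar>Im z - r\<bar>"
proof -
  define z0 where "z0 = Complex (Re z) r"
  have z0: "Im z0 = r" "Re z0 = Re z" unfolding z0_def by simp_all
  have e: "H_ann r u = - \<i> * S_ann r (exp (\<i> * u))" for u unfolding H_ann_def by (simp add: divide_complex_def)
  have h0: "Im (H_ann r z0) = -1" by (rule H_circle(1)[OF r z0(1)])
  have w: "exp (\<i> * z) = complex_of_real (exp (- Im z)) * cis (Re z)" by (subst exp_eq_polar) simp
  have w0: "exp (\<i> * z0) = complex_of_real (exp (- r)) * cis (Re z)" by (subst exp_eq_polar) (simp add: z0)
  have zz: "r / 2 \<le> Im z" "Im z \<le> 3 * r / 2" using abs_le_D1[OF zr] abs_le_D2[OF zr] by linarith+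
  have reg: "inreg r (exp (\<i> * z))" unfolding inreg_def w using zz by (auto simp: norm_mult)
  have reg0: "inreg r (exp (\<i> * z0))" by (rule inreg_circle[OF r z0(1)])
  have "\<bar>Im (H_ann r z) + 1\<bar> = \<bar>Im (H_ann r z) - Im (H_ann r z0)\<bar>" using h0 by simp
  also have "\<dots> = \<bar>Re (S_ann r (exp (\<i> * z)) - S_ann r (exp (\<i> * z0)))\<bar>" unfolding e by simp
  also have "\<dots> \<le> norm (S_ann r (exp (\<i> * z)) - S_ann r (exp (\<i> * z0)))" by (rule abs_Re_le_cmod)
  also have "\<dots> \<le> Lip r * norm (exp (\<i> * z) - exp (\<i> * z0))" by (rule S_lip[OF r reg reg0])
  also have "norm (exp (\<i> * z) - exp (\<i> * z0)) = \<bar>exp (- Im z) - exp (- r)\<bar>"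
    unfolding w w0 by (simp add: left_diff_distrib[symmetric] norm_mult of_real_diff[symmetric] del: of_real_diff)
  also have "\<bar>exp (- Im z) - exp (- r)\<bar> \<le> \<bar>Im z - r\<bar>"
  proof -
    have "\<bar>exp (- Im z) - exp (- r)\<bar> \<le> \<bar>- Im z - - r\<bar>" using exp_lip[of "- Im z" "- r"] zz r by simp
    also have "\<bar>- Im z - - r\<bar> = \<bar>Im z - r\<bar>" by (simp add: abs_minus_commute)
    finally show ?thesis .
  qed
  finally show ?thesis using Lip_nonneg[OF r] by (simp add: mult_left_mono)
qed

lemma Lip_bounded:
  assumes r0: "r0 > 0" "r0 \<le> p"
  obtains B where "\<And>r. r \<in> {r0..p} \<Longrightarrow> Lip r \<le> B"
proof -
  have "continuous_on {r0..p} Lip" unfolding Lip_def Cl_def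
    using r0 by (intro continuous_intros) auto
  then obtain x where "x \<in> {r0..p}" "\<forall>y\<in>{r0..p}. Lip y \<le> Lip x"
    using continuous_attains_sup[of "{r0..p}" Lip] r0 by auto
  then show ?thesis using that by blast
qed




lemma Im_phi:
  fixes phi0 :: "real \<Rightarrow> complex" and xi :: "real \<Rightarrow> real"
  assumes p: "p > 0" and z: "Im z = p" and ph0: "phi0 0 = z"
    and d: "\<forall>t\<in>{0..<p}. (phi0 has_vector_derivative H_ann (p - t) (phi0 t - complex_of_real (xi t))) (at t within {0..<p})"
    and t0: "t0 \<in> {0..<p}"
  shows "Im (phi0 t0) = p - t0"
proof -
  define r0 where "r0 = p - t0"
  have r0: "r0 > 0" "r0 \<le> p" using t0 unfolding r0_def by auto
  obtain B where B: "\<And>r. r \<in> {r0..p} \<Longrightarrow> Lip r \<le> B" using Lip_bounded[OF r0] by blast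
  define f where "f t = Im (phi0 t) - (p - t)" for t
  define f' where "f' t = Im (H_ann (p - t) (phi0 t - complex_of_real (xi t))) + 1" for t
  have df: "\<forall>t\<in>{0..<p}. (f has_real_derivative f' t) (at t within {0..<p})"
  proof
    fix t assume t: "t \<in> {0..<p}"
    have "((\<lambda>t. Im (phi0 t)) has_real_derivative Im (H_ann (p - t) (phi0 t - complex_of_real (xi t)))) (at t within {0..<p})"
      using d t by (intro has_field_derivative_Im) auto
    then have "((\<lambda>t. Im (phi0 t) - (p - t)) has_real_derivative Im (H_ann (p - t) (phi0 t - complex_of_real (xi t))) - (- 1)) (at t within {0..<p})"
    proof -
      have dp: "((\<lambda>t. p - t) has_real_derivative - 1) (at t within {0..<p})"
        by (auto intro!: derivative_eq_intros)
      show ?thesis using DERIV_diff[OF \<open>((\<lambda>t. Im (phi0 t)) has_real_derivative _) _\<close> dp] by simp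
    qed
    then show "(f has_real_derivative f' t) (at t within {0..<p})" unfolding f_def f'_def by simp
  qed
  have "f t0 = 0"
  proof (rule gronwall_zero[where f = f and t = t0 and T = t0 and p = p and \<delta> = "r0 / 2" and L = B and f' = f'])
    show "0 \<le> t0" "t0 < p" using t0 by auto
    show "f 0 = 0" unfolding f_def using ph0 z by simp
    show "\<forall>t\<in>{0..<p}. (f has_real_derivative f' t) (at t within {0..<p})" by (rule df)
    show "r0 / 2 > 0" using r0 by simp
    show "t0 \<in> {0..t0}" using t0 by simp
    fix t assume t: "t \<in> {0..t0}" and ft: "\<bar>f t\<bar> \<le> r0 / 2"
    define r where "r = p - t"
    have r: "r > 0" "r \<in> {r0..p}" using t t0 unfolding r_def r0_def by auto
    have im: "Im (phi0 t - complex_of_real (xi t)) - r = f t" unfolding f_def r_def by simp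
    have "\<bar>Im (phi0 t - complex_of_real (xi t)) - r\<bar> \<le> r / 2" unfolding im using ft r by simp
    from ImH_lip[OF r(1) this]
    have "\<bar>f' t\<bar> \<le> Lip r * \<bar>f t\<bar>" unfolding f'_def im r_def by (simp add: f_def)
    also have "\<dots> \<le> B * \<bar>f t\<bar>" using B[OF r(2)] by (intro mult_right_mono) auto
    finally show "\<bar>f' t\<bar> \<le> B * \<bar>f t\<bar>" .
  qed
  then show ?thesis unfolding f_def by simp
qed

lemma window:
  fixes phi0 :: "real \<Rightarrow> complex" and xi :: "real \<Rightarrow> real"
  assumes p: "p > 0" and z: "Im z = p" and ph0: "phi0 0 = z"
    and d: "\<forall>t\<in>{0..<p}. (phi0 has_vector_derivative H_ann (p - t) (phi0 t - complex_of_real (xi t))) (at t within {0..<p})"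
    and Mb: "\<forall>t\<in>{0..<p}. \<bar>Re (phi0 t) - xi t\<bar> \<le> M * (p - t)" and M: "M \<ge> 0"
    and t: "0 \<le> t" and r: "r = p - t" "0 < r" "r \<le> 1/4"
  shows "\<bar>xi (t + r\<^sup>2) - xi t\<bar> \<le> 16 * M * r"
proof -
  have rr: "r\<^sup>2 \<le> r / 4" using r by (simp add: power2_eq_square mult_left_le)
  have tp: "t + r\<^sup>2 < p" using r rr by simp
  define g' where "g' s = Re (H_ann (p - s) (phi0 s - complex_of_real (xi s)))" for s
  have dg: "\<forall>s\<in>{0..<p}. ((\<lambda>s. Re (phi0 s)) has_real_derivative g' s) (at s within {0..<p})"
    unfolding g'_def using d by (auto intro: has_field_derivative_Re)
  have bd: "\<forall>s\<in>{t..t + r\<^sup>2}. \<bar>g' s\<bar> \<le> 14 * M / r"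
  proof
    fix s assume s: "s \<in> {t..t + r\<^sup>2}"
    have sp: "s \<in> {0..<p}" using s t tp by auto
    have rs: "p - s \<ge> 3 * r / 4" "p - s > 0" using s rr r by auto
    have ims: "Im (phi0 s - complex_of_real (xi s)) = p - s" using Im_phi[OF p z ph0 d sp] by simp
    have "\<bar>g' s\<bar> \<le> 10 * \<bar>Re (phi0 s - complex_of_real (xi s))\<bar> / (p - s)\<^sup>2"
      unfolding g'_def by (rule H_circle(2)[OF rs(2) ims])
    also have "\<dots> \<le> 10 * (M * (p - s)) / (p - s)\<^sup>2"
      using Mb sp rs by (intro divide_right_mono mult_left_mono) auto
    also have "\<dots> = 10 * M / (p - s)" using rs by (simp add: power2_eq_square)
    also have "\<dots> \<le> 10 * M / (3 * r / 4)"
      using rs M r by (intro divide_left_mono) auto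
    also have "\<dots> \<le> 14 * M / r" using M r by (simp add: field_simps)
    finally show "\<bar>g' s\<bar> \<le> 14 * M / r" .
  qed
  have "\<bar>Re (phi0 (t + r\<^sup>2)) - Re (phi0 t)\<bar> \<le> 14 * M / r * (t + r\<^sup>2 - t)"
    by (rule mvt_bound[OF t _ tp dg bd]) simp
  also have "\<dots> = 14 * M * r" using r by (simp add: power2_eq_square)
  finally have 1: "\<bar>Re (phi0 (t + r\<^sup>2)) - Re (phi0 t)\<bar> \<le> 14 * M * r" .
  have 2: "\<bar>Re (phi0 (t + r\<^sup>2)) - xi (t + r\<^sup>2)\<bar> \<le> M * r"
  proof -
    have "\<bar>Re (phi0 (t + r\<^sup>2)) - xi (t + r\<^sup>2)\<bar> \<le> M * (p - (t + r\<^sup>2))" using Mb t tp by auto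
    also have "\<dots> \<le> M * r" using M r by (intro mult_left_mono) auto
    finally show ?thesis .
  qed
  have 3: "\<bar>Re (phi0 t) - xi t\<bar> \<le> M * r" using Mb t r by auto
  show ?thesis using 1 2 3 by linarith
qed




lemma std_normal_Q:
  fixes c :: real assumes c: "c \<ge> 0"
  shows "measure (density lborel (\<lambda>x. ennreal (normal_density 0 1 x))) {-c..c} < 1"
proof -
  define D where "D = density lborel (\<lambda>x. ennreal (normal_density 0 1 x))"
  interpret D: prob_space D unfolding D_def by (rule prob_space_normal_density) auto
  have sD: "sets D = sets borel" unfolding D_def by simp
  define \<epsilon> where "\<epsilon> = 1 / sqrt (2 * pi) * exp (- (c + 1)\<^sup>2 / 2)"
  have \<epsilon>: "\<epsilon> > 0" unfolding \<epsilon>_def by simp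
  have pw: "ennreal \<epsilon> * indicator {c<..c+1} x \<le> ennreal (normal_density 0 1 x) * indicator {c<..c+1} x" for x
  proof (cases "x \<in> {c<..c+1}")
    case True
    then have "x\<^sup>2 \<le> (c + 1)\<^sup>2" using c by (intro power_mono) auto
    then have "exp (- (c + 1)\<^sup>2 / 2) \<le> exp (- x\<^sup>2 / 2)" by simp
    then have "\<epsilon> \<le> normal_density 0 1 x" unfolding \<epsilon>_def std_normal_density_def
      by (intro mult_left_mono) auto
    then show ?thesis using True by (simp add: ennreal_leI)
  qed simp
  have "ennreal \<epsilon> = ennreal \<epsilon> * emeasure lborel {c<..c+1}" by simp
  also have "\<dots> = (\<integral>\<^sup>+ x. ennreal \<epsilon> * indicator {c<..c+1} x \<partial>lborel)"
    by (rule nn_integral_cmult_indicator[symmetric]) simp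
  also have "\<dots> \<le> (\<integral>\<^sup>+ x. ennreal (normal_density 0 1 x) * indicator {c<..c+1} x \<partial>lborel)"
    by (intro nn_integral_mono pw)
  also have "\<dots> = emeasure D {c<..c+1}" unfolding D_def
    by (rule emeasure_density[symmetric]) auto
  also have "\<dots> = ennreal (measure D {c<..c+1})" by (rule D.emeasure_eq_measure)
  finally have "\<epsilon> \<le> measure D {c<..c+1}" using \<epsilon> by (simp add: ennreal_le_iff)
  then have pos: "measure D {c<..c+1} > 0" using \<epsilon> by simp
  have "measure D ({-c..c} \<union> {c<..c+1}) = measure D {-c..c} + measure D {c<..c+1}"
    by (rule D.finite_measure_Union) (auto simp: sD)
  moreover have "measure D ({-c..c} \<union> {c<..c+1}) \<le> 1" by (rule D.prob_le_1)
  ultimately show ?thesis using pos unfolding D_def by simp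
qed

definition rr :: "real \<Rightarrow> nat \<Rightarrow> real" where
  "rr p n = min p (1/4) / 2 ^ n"

lemma rr_props:
  assumes p: "p > 0"
  shows "rr p n > 0" "rr p n \<le> 1/4" "rr p n \<le> p" "rr p (Suc n) = rr p n / 2" "(rr p n)\<^sup>2 < rr p n / 2"
proof -
  have m: "min p (1/4) > 0" using p by simp
  show "rr p n > 0" unfolding rr_def using m by simp
  have "min p (1/4) / 2 ^ n \<le> min p (1/4) / 1" using m by (intro divide_left_mono) auto
  then have "rr p n \<le> min p (1/4)" unfolding rr_def by simp
  then show "rr p n \<le> 1/4" "rr p n \<le> p" by auto
  show "rr p (Suc n) = rr p n / 2" unfolding rr_def by simp
  have "rr p n * rr p n \<le> rr p n * (1/4)" using \<open>rr p n \<le> 1/4\<close> \<open>rr p n > 0\<close> by (intro mult_left_mono) auto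
  then show "(rr p n)\<^sup>2 < rr p n / 2" using \<open>rr p n > 0\<close> by (simp add: power2_eq_square)
qed

lemma windows_null:
  fixes M :: "'w measure" and B :: "real \<Rightarrow> 'w \<Rightarrow> real"
  assumes BM: "standard_BM M B" and p: "p > 0" and c: "c \<ge> 0"
  shows "(\<Inter>j. {\<omega>\<in>space M. \<bar>B (p - rr p j + (rr p j)\<^sup>2) \<omega> - B (p - rr p j) \<omega>\<bar> \<le> c * rr p j}) \<in> null_sets M"
proof -
  have ps: "prob_space M" and meas: "\<forall>t\<ge>0. B t \<in> borel_measurable M"
    and dist: "\<forall>s t. 0 \<le> s \<and> s < t \<longrightarrow>
        distributed M lborel (\<lambda>\<omega>. B t \<omega> - B s \<omega>) (normal_density 0 (sqrt (t - s)))"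
    and ind: "\<forall>(ts :: nat \<Rightarrow> real) n. 0 \<le> ts 0 \<and> (\<forall>i<n. ts i < ts (Suc i)) \<longrightarrow>
        prob_space.indep_vars M (\<lambda>_. borel) (\<lambda>i \<omega>. B (ts (Suc i)) \<omega> - B (ts i) \<omega>) {..<n}"
    using BM unfolding standard_BM_def by auto
  interpret prob_space M by (rule ps)
  let ?r = "rr p"
  define tt where "tt j = p - ?r j" for j
  define ts where "ts i = (if even i then tt (i div 2) else tt (i div 2) + (?r (i div 2))\<^sup>2)" for i :: nat
  define X where "X i \<omega> = B (ts (Suc i)) \<omega> - B (ts i) \<omega>" for i \<omega>
  have tt0: "tt j \<ge> 0" for j unfolding tt_def using rr_props(3)[OF p, of j] by simp
  have ts_e: "ts (2 * j) = tt j" for j unfolding ts_def by simp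
  have ts_o: "ts (Suc (2 * j)) = tt j + (?r j)\<^sup>2" for j unfolding ts_def by simp
  have ts_e2: "ts (Suc (Suc (2 * j))) = tt (Suc j)" for j
  proof -
    have "Suc (Suc (2 * j)) = 2 * Suc j" by simp
    then show ?thesis using ts_e by metis
  qed
  have inc: "ts i < ts (Suc i)" for i
  proof (cases "even i")
    case True
    then obtain j where i: "i = 2 * j" by (auto elim: evenE)
    show ?thesis unfolding i ts_e ts_o using rr_props(1)[OF p, of j] by simp
  next
    case False
    then obtain j where i: "i = Suc (2 * j)" by (auto elim: oddE)
    have "tt j + (?r j)\<^sup>2 < tt (Suc j)" unfolding tt_def using rr_props(4,5)[OF p, of j] by simp
    then show ?thesis unfolding i ts_o ts_e2 .
  qed
  have ts0: "ts i \<ge> 0" for i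
  proof (cases "even i")
    case True
    then obtain j where i: "i = 2 * j" by (auto elim: evenE)
    show ?thesis unfolding i ts_e using tt0 by simp
  next
    case False
    then obtain j where i: "i = Suc (2 * j)" by (auto elim: oddE)
    show ?thesis unfolding i ts_o using tt0[of j] by simp
  qed
  have Xm: "X i \<in> borel_measurable M" for i
    unfolding X_def using meas ts0 by (intro borel_measurable_diff) auto
  define Q where "Q = measure (density lborel (\<lambda>x. ennreal (normal_density 0 1 x))) {-c..c}"
  have Q: "0 \<le> Q" "Q < 1" unfolding Q_def using std_normal_Q[OF c] by auto
  define Aset where "Aset j = X (2 * j) -` {- (c * ?r j)..c * ?r j} \<inter> space M" for j
  have Aset_eq: "Aset j = {\<omega>\<in>space M. \<bar>B (p - rr p j + (rr p j)\<^sup>2) \<omega> - B (p - rr p j) \<omega>\<bar> \<le> c * rr p j}" for j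
    unfolding Aset_def X_def ts_o ts_e tt_def by (auto simp: abs_le_iff)
  have Aset_sets: "Aset j \<in> sets M" for j
    unfolding Aset_def by (rule measurable_sets[OF Xm]) simp
  have probA: "prob (Aset j) = Q" for j
  proof -
    have rj: "?r j > 0" using rr_props(1)[OF p] by simp
    have "distributed M lborel (X (2 * j)) (normal_density 0 (sqrt (ts (Suc (2 * j)) - ts (2 * j))))"
      unfolding X_def using dist ts0 inc by blast
    moreover have "sqrt (ts (Suc (2 * j)) - ts (2 * j)) = ?r j" unfolding ts_o ts_e using rj by simp
    ultimately have "distributed M lborel (X (2 * j)) (normal_density 0 (?r j))" by simp
    then have dz: "distributed M lborel (\<lambda>\<omega>. (X (2 * j) \<omega> - 0) / ?r j) (normal_density 0 1)"
      using normal_standard_normal_convert[OF rj] by simp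
    define Z where "Z \<omega> = (X (2 * j) \<omega> - 0) / ?r j" for \<omega>
    have Zd: "distr M lborel Z = density lborel (\<lambda>x. ennreal (normal_density 0 1 x))"
      and Zm: "Z \<in> measurable M lborel"
      using dz unfolding distributed_def Z_def by auto
    have "Aset j = Z -` {-c..c} \<inter> space M"
      unfolding Aset_def Z_def using rj by (auto simp: field_simps)
    then have "prob (Aset j) = measure (distr M lborel Z) {-c..c}"
      using measure_distr[OF Zm, of "{-c..c}"] by simp
    then show ?thesis unfolding Zd Q_def .
  qed
  have prodN: "prob (\<Inter>j\<in>{..<N}. Aset j) = Q ^ N" if N: "N \<ge> 1" for N
  proof -
    have iv: "indep_vars (\<lambda>_. borel) X {..<2 * N}"
      unfolding X_def using ind ts0 inc by blast
    then have isets: "indep_sets (\<lambda>i. {X i -` S \<inter> space M | S. S \<in> sets borel}) {..<2 * N}"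
      unfolding indep_vars_def2 by simp
    define AA where "AA i = X i -` {- (c * ?r (i div 2))..c * ?r (i div 2)} \<inter> space M" for i
    define J where "J = (\<lambda>j. 2 * j) ` {..<N}"
    have "0 \<in> J" unfolding J_def using N by (auto intro!: image_eqI[of 0 _ 0])
    then have J: "J \<subseteq> {..<2 * N}" "J \<noteq> {}" "finite J" unfolding J_def by auto
    have "\<forall>i\<in>J. AA i \<in> {X i -` S \<inter> space M | S. S \<in> sets borel}" unfolding AA_def by auto
    from indep_setsD[OF isets J this]
    have eq: "prob (\<Inter>i\<in>J. AA i) = (\<Prod>i\<in>J. prob (AA i))" .
    have AA2: "AA (2 * j) = Aset j" for j unfolding AA_def Aset_def by simp
    have "(\<Inter>i\<in>J. AA i) = (\<Inter>j\<in>{..<N}. Aset j)" unfolding J_def using AA2 by auto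
    moreover have "(\<Prod>i\<in>J. prob (AA i)) = (\<Prod>j\<in>{..<N}. prob (AA (2 * j)))"
      unfolding J_def by (subst prod.reindex) (auto simp: inj_on_def)
    moreover have "(\<Prod>j\<in>{..<N}. prob (AA (2 * j))) = Q ^ N" unfolding AA2 probA by simp
    ultimately show ?thesis using eq by simp
  qed
  define E where "E = (\<Inter>j. Aset j)"
  have Es: "E \<in> sets M" unfolding E_def using Aset_sets by auto
  have bound: "prob E \<le> Q ^ N" if "N \<ge> 1" for N
  proof -
    have "0 \<in> {..<N}" using that by simp
    then have ne: "{..<N} \<noteq> {}" by blast
    have "(\<Inter>j\<in>{..<N}. Aset j) \<in> sets M" using Aset_sets ne by (intro sets.finite_INT) auto
    then have "prob E \<le> prob (\<Inter>j\<in>{..<N}. Aset j)"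
      by (intro finite_measure_mono) (auto simp: E_def)
    then show ?thesis using prodN[OF that] by simp
  qed
  have "(\<lambda>N. Q ^ N) \<longlonglongrightarrow> 0" using Q by (intro LIMSEQ_power_zero) simp
  then have "prob E \<le> 0"
    by (rule LIMSEQ_le_const) (use bound in auto)
  then have "prob E = 0" by (simp add: antisym)
  then have "emeasure M E = 0" using Es by (simp add: emeasure_eq_measure)
  then have "E \<in> null_sets M" using Es by auto
  moreover have "E = (\<Inter>j. {\<omega>\<in>space M. \<bar>B (p - rr p j + (rr p j)\<^sup>2) \<omega> - B (p - rr p j) \<omega>\<bar> \<le> c * rr p j})"
    unfolding E_def Aset_eq ..
  ultimately show ?thesis by simp
qed




theorem lemma3p1:
  fixes M :: "'w measure" and B :: "real \<Rightarrow> 'w \<Rightarrow> real"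
    and \<kappa> p :: real and z :: complex and phi :: "'w \<Rightarrow> real \<Rightarrow> complex"
  assumes BM: "standard_BM M B"
    and kappa: "\<kappa> > 0" and p: "p > 0"
    and z: "Im z = p"
    and sol: "\<forall>\<omega>\<in>space M. phi \<omega> 0 = z \<and>
      (\<forall>t\<in>{0..<p}. (phi \<omega> has_vector_derivative
          H_ann (p - t) (phi \<omega> t - complex_of_real (sqrt \<kappa> * B t \<omega>))) (at t within {0..<p}))"
  shows "AE \<omega> in M. \<not> bounded ((\<lambda>s. X_proc p (phi \<omega>) (\<lambda>t. sqrt \<kappa> * B t \<omega>) s) ` {pi\<^sup>2 / p..})"
proof -
  define c where "c m = 16 * real m / sqrt \<kappa>" for m :: nat
  define N where "N = (\<Union>m. \<Inter>j. {\<omega>\<in>space M. \<bar>B (p - rr p j + (rr p j)\<^sup>2) \<omega> - B (p - rr p j) \<omega>\<bar> \<le> c m * rr p j})"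
  have c0: "c m \<ge> 0" for m unfolding c_def using kappa by simp
  have "N \<in> null_sets M" unfolding N_def using windows_null[OF BM p c0] by auto
  then show ?thesis
  proof (rule AE_I')
    show "{\<omega> \<in> space M. \<not> \<not> bounded ((\<lambda>s. X_proc p (phi \<omega>) (\<lambda>t. sqrt \<kappa> * B t \<omega>) s) ` {pi\<^sup>2 / p..})} \<subseteq> N"
    proof (rule subsetI)
      fix \<omega> assume asm: "\<omega> \<in> {\<omega> \<in> space M. \<not> \<not> bounded ((\<lambda>s. X_proc p (phi \<omega>) (\<lambda>t. sqrt \<kappa> * B t \<omega>) s) ` {pi\<^sup>2 / p..})}"
      then have \<omega>: "\<omega> \<in> space M"
        and bdd: "bounded ((\<lambda>s. X_proc p (phi \<omega>) (\<lambda>t. sqrt \<kappa> * B t \<omega>) s) ` {pi\<^sup>2 / p..})" by auto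
      define xi where "xi t = sqrt \<kappa> * B t \<omega>" for t
      obtain a where a: "\<forall>s\<in>{pi\<^sup>2 / p..}. \<bar>X_proc p (phi \<omega>) xi s\<bar> \<le> a"
        using bdd unfolding bounded_real xi_def by auto
      define m where "m = nat \<lceil>a\<rceil>"
      have am: "a \<le> real m" unfolding m_def by linarith
      have ph0: "phi \<omega> 0 = z"
        and d: "\<forall>t\<in>{0..<p}. (phi \<omega> has_vector_derivative H_ann (p - t) (phi \<omega> t - complex_of_real (xi t))) (at t within {0..<p})"
        using sol \<omega> unfolding xi_def by auto
      have Mb: "\<forall>t\<in>{0..<p}. \<bar>Re (phi \<omega> t) - xi t\<bar> \<le> real m * (p - t)"
      proof
        fix t assume t: "t \<in> {0..<p}"
        have pt: "p - t > 0" "p - t \<le> p" using t by auto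
        define s where "s = pi\<^sup>2 / (p - t)"
        have s: "s \<in> {pi\<^sup>2 / p..}" unfolding s_def using pt p by (auto intro!: divide_left_mono)
        have ts: "p - pi\<^sup>2 / s = t" unfolding s_def using pt by simp
        have X: "X_proc p (phi \<omega>) xi s = pi / (p - t) * (Re (phi \<omega> t) - xi t)"
          unfolding X_proc_def Let_def ts by simp
        have "\<bar>pi / (p - t) * (Re (phi \<omega> t) - xi t)\<bar> \<le> real m" using a s am X by force
        then have "pi / (p - t) * \<bar>Re (phi \<omega> t) - xi t\<bar> \<le> real m" using pt by (simp add: abs_mult)
        then have "\<bar>Re (phi \<omega> t) - xi t\<bar> \<le> real m * (p - t) / pi" using pt by (simp add: field_simps)
        also have "\<dots> \<le> real m * (p - t) / 1"
          using pt pi_gt3 by (intro divide_left_mono) auto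
        also have "\<dots> = real m * (p - t)" by simp
        finally show "\<bar>Re (phi \<omega> t) - xi t\<bar> \<le> real m * (p - t)" .
      qed
      have "\<omega> \<in> {\<omega>\<in>space M. \<bar>B (p - rr p j + (rr p j)\<^sup>2) \<omega> - B (p - rr p j) \<omega>\<bar> \<le> c m * rr p j}" for j
      proof -
        have rj: "0 < rr p j" "rr p j \<le> 1/4" "rr p j \<le> p" using rr_props[OF p] by auto
        have "\<bar>xi (p - rr p j + (rr p j)\<^sup>2) - xi (p - rr p j)\<bar> \<le> 16 * real m * rr p j"
          using window[OF p z ph0 d Mb, where t = "p - rr p j" and r = "rr p j"] rj by simp
        then have "sqrt \<kappa> * \<bar>B (p - rr p j + (rr p j)\<^sup>2) \<omega> - B (p - rr p j) \<omega>\<bar> \<le> 16 * real m * rr p j"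
          unfolding xi_def using kappa by (simp add: right_diff_distrib[symmetric] abs_mult)
        then have "\<bar>B (p - rr p j + (rr p j)\<^sup>2) \<omega> - B (p - rr p j) \<omega>\<bar> \<le> c m * rr p j"
          unfolding c_def using kappa by (simp add: field_simps)
        then show ?thesis using \<omega> by simp
      qed
      then show "\<omega> \<in> N" unfolding N_def by blast
    qed
  qed
qed


end
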